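(* Let $T_C$ be a finite complete binary tree with vertices $v_1,\dots,v_M$, each vertex $v_i$ carrying a parameter $l_i\in[0,1]$. Define functions $m, \tilde m$ on the vertices of $T_C$ top-down by $$m(v_i) = \big(\tilde m(\mathrm{parent}(v_i))\big)^{1/2}\, l_i, \qquad \tilde m(v_i) = \big(\tilde m(\mathrm{parent}(v_i))\big)^{1/2}\,(1-l_i),$$ with the convention $\tilde m(\mathrm{parent}(\mathrm{root}(T_C))) = 1$. Then for every internal tree $T$ of $T_C$ with $N$ leaves $L_1(T),\dots,L_N(T)$, $$p(T) = \prod_{n=1}^N m(L_n(T)).$$
   Context: All trees are rooted, and children are designated left or right. A complete binary tree is a rooted tree in which every non-leaf vertex has exactly two children (a left and a right child). A full binary tree is a rooted tree in which every vertex has 0 or 2 children. An internal tree of $T_C$ is a full binary tree $T$ with $\mathrm{root}(T)=\mathrm{root}(T_C)$ whose vertices and edges are a subset of those of $T_C$ (left/right children as in $T_C$). $L(T)=(L_1(T),\dots,L_N(T))$ denotes the leaves of $T$ ordered from left-most to right-most. The probability of an internal tree is $p(T)=\pi(\mathrm{root}(T))$, where $\pi(v_i)=l_i$ if $v_i\in L(T)$ and $\pi(v_i)=(1-l_i)\,\pi(\mathrm{left}(v_i))\,\pi(\mathrm{right}(v_i))$ otherwise, with $\mathrm{left},\mathrm{right}$ denoting children in $T$. *)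

theory Defs
  imports Complex_Main
begin

datatype ctree = CLeaf real | CNode real ctree ctree

text \<open>Vertices of T_C are addressed by their path from the root
  (False = go to left child, True = go to right child); [] is the root and
  the parent of a vertex v is butlast v.\<close>
fun vertices :: "ctree \<Rightarrow> bool list set" where
  "vertices (CLeaf l) = {[]}"
| "vertices (CNode l c d) = insert [] (Cons False ` vertices c \<union> Cons True ` vertices d)"

fun labels :: "ctree \<Rightarrow> real set" where
  "labels (CLeaf l) = {l}"
| "labels (CNode l c d) = insert l (labels c \<union> labels d)"

fun lab :: "ctree \<Rightarrow> bool list \<Rightarrow> real" where
  "lab (CLeaf l) [] = l"
| "lab (CNode l c d) [] = l"
| "lab (CNode l c d) (b # p) = lab (if b then d else c) p"
| "lab (CLeaf l) (b # p) = undefined"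

function mtil :: "ctree \<Rightarrow> bool list \<Rightarrow> real" where
  "mtil T v = sqrt (if v = [] then 1 else mtil T (butlast v)) * (1 - lab T v)"
  by auto
termination by (relation "measure (\<lambda>(T, v). length v)") auto

declare mtil.simps[simp del]

definition m :: "ctree \<Rightarrow> bool list \<Rightarrow> real" where
  "m T v = sqrt (if v = [] then 1 else mtil T (butlast v)) * lab T v"

datatype itree = ILeaf | INode itree itree

text \<open>A full binary tree shape S is an internal tree of T_C when it embeds
  at the root of T_C preserving left/right children.\<close>
fun internal :: "itree \<Rightarrow> ctree \<Rightarrow> bool" where
  "internal ILeaf T = True"
| "internal (INode a b) (CNode l c d) = (internal a c \<and> internal b d)"
| "internal (INode a b) (CLeaf l) = False"

fun leaves :: "itree \<Rightarrow> bool list list" where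
  "leaves ILeaf = [[]]"
| "leaves (INode a b) = map (Cons False) (leaves a) @ map (Cons True) (leaves b)"

fun prob :: "itree \<Rightarrow> ctree \<Rightarrow> real" where
  "prob ILeaf T = lab T []"
| "prob (INode a b) (CNode l c d) = (1 - l) * prob a c * prob b d"
| "prob (INode a b) (CLeaf l) = undefined"

end

theory Submission
  imports Defs
begin

fun sub :: "ctree \<Rightarrow> bool list \<Rightarrow> ctree" where
  "sub T [] = T"
| "sub (CNode l c d) (b # p) = sub (if b then d else c) p"
| "sub (CLeaf l) (b # p) = CLeaf l"

lemma nil_vert: "[] \<in> vertices T"
  by (cases T) auto

lemma sub_leaf: "sub (CLeaf l) p = CLeaf l"
  by (cases p) auto

lemma sub_append: "sub T (q @ p) = sub (sub T q) p"
  by (induction T q rule: sub.induct) (auto simp: sub_leaf)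

lemma lab_append: "q \<in> vertices T \<Longrightarrow> lab T (q @ p) = lab (sub T q) p"
  by (induction T q rule: sub.induct) auto

lemma vertices_append: "q \<in> vertices T \<Longrightarrow> (q @ p \<in> vertices T) = (p \<in> vertices (sub T q))"
  by (induction T q rule: sub.induct) auto

lemma vertices_prefix: "q @ p \<in> vertices T \<Longrightarrow> q \<in> vertices T"
  proof (induction q arbitrary: T)
  case Nil then show ?case by (cases T) auto
next
  case (Cons b q) then show ?case by (cases T) auto
qed

lemma lab_in: "q \<in> vertices T \<Longrightarrow> lab T q \<in> labels T"
  proof (induction q arbitrary: T)
  case Nil then show ?case by (cases T) auto
next
  case (Cons b q) then show ?case by (cases T) auto
qed

lemma leaves_vert: "internal S C \<Longrightarrow> p \<in> set (leaves S) \<Longrightarrow> p \<in> vertices C"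
proof (induction S C arbitrary: p rule: internal.induct)
  case (1 T) then show ?case by (cases T) auto
qed auto

lemma mtil_nonneg:
  assumes "\<forall>x \<in> labels T. 0 \<le> x \<and> x \<le> 1"
  shows "v \<in> vertices T \<Longrightarrow> mtil T v \<ge> 0"
proof (induction v rule: length_induct)
  case (1 v)
  have l: "lab T v \<le> 1" using lab_in[OF 1(2)] assms by auto
  show ?case
  proof (cases "v = []")
    case True then show ?thesis using l by (subst mtil.simps) simp
  next
    case False
    then have "butlast v @ [last v] = v" by simp
    then have "butlast v \<in> vertices T" using vertices_prefix 1(2) by metis
    then have "mtil T (butlast v) \<ge> 0" using 1 False by (metis length_butlast diff_less length_greater_0_conv zero_less_one)
    then show ?thesis using l False by (subst mtil.simps) simp
  qed
qed

lemma main: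
  assumes lb: "\<forall>x \<in> labels TC. 0 \<le> x \<and> x \<le> 1"
  shows "q \<in> vertices TC \<Longrightarrow> sub TC q = C \<Longrightarrow> internal S C \<Longrightarrow>
    prod_list (map (\<lambda>p. m TC (q @ p)) (leaves S)) = sqrt (if q = [] then 1 else mtil TC (butlast q)) * prob S C"
proof (induction S arbitrary: q C)
  case ILeaf
  then show ?case by (simp add: m_def lab_append[where p="[]", simplified])
next
  case (INode a b)
  then obtain l c d where C: "C = CNode l c d" by (cases C) auto
  have ia: "internal a c" and ib: "internal b d" using INode C by auto
  have vF: "q @ [False] \<in> vertices TC" and vT: "q @ [True] \<in> vertices TC"
    using vertices_append[OF INode(3)] INode(4) C nil_vert by auto
  have sF: "sub TC (q @ [False]) = c" and sT: "sub TC (q @ [True]) = d"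
    using INode(4) C by (simp_all add: sub_append)
  have hA: "prod_list (map (\<lambda>p. m TC (q @ [False] @ p)) (leaves a)) = sqrt (mtil TC q) * prob a c"
    using INode(1)[OF vF sF ia] by simp
  have hB: "prod_list (map (\<lambda>p. m TC (q @ [True] @ p)) (leaves b)) = sqrt (mtil TC q) * prob b d"
    using INode(2)[OF vT sT ib] by simp
  have nn: "mtil TC q \<ge> 0" using mtil_nonneg[OF lb INode(3)] .
  have lq: "lab TC q = l" using lab_append[OF INode(3), where p="[]"] INode(4) C by simp
  have mt: "mtil TC q = sqrt (if q = [] then 1 else mtil TC (butlast q)) * (1 - l)"
    using lq by (subst mtil.simps) simp
  have "prod_list (map (\<lambda>p. m TC (q @ p)) (leaves (INode a b)))
     = prod_list (map (\<lambda>p. m TC (q @ [False] @ p)) (leaves a)) * prod_list (map (\<lambda>p. m TC (q @ [True] @ p)) (leaves b))"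
    by (simp add: comp_def)
  also have "\<dots> = (sqrt (mtil TC q) * sqrt (mtil TC q)) * prob a c * prob b d"
    using hA hB by simp
  also have "\<dots> = mtil TC q * prob a c * prob b d" using nn by simp
  finally show ?case using mt C by simp
qed

theorem mainTheorem3:
  fixes TC :: ctree and T :: itree
  assumes "\<forall>x \<in> labels TC. 0 \<le> x \<and> x \<le> 1"
    and "internal T TC"
  shows "prob T TC = (\<Prod>n<length (leaves T). m TC (leaves T ! n))"
proof -
  have "prod_list (map (\<lambda>p. m TC ([] @ p)) (leaves T)) = prob T TC"
    using main[OF assms(1), of "[]" TC T] assms(2) by (cases TC) auto
  then show ?thesis by (simp add: prod.list_conv_set_nth atLeast0LessThan)
qed

end
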